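(* Let $\gamma$ be a gauge on $\mathbb{R}^d$ and $v\in\mathrm{SD}_\gamma$. Let $A\subset\mathbb{R}^d$ be a finite set with positive weights $w_a$, $a\in A$, and suppose all points of $A$ lie on a line parallel to $v$. Then the Fermat–Weber problem of minimizing $\sum_{a\in A}w_a\gamma(x-a)$ over $x\in\mathbb{R}^d$ has a minimizer lying on that line.
   Context: A gauge $\gamma$ on $\mathbb{R}^d$ is the Minkowski functional of a convex compact set $B_\gamma$ having the origin in its interior (not necessarily symmetric). Its skewness is $\sigma=\sup_{x\neq0}\gamma(x)/\gamma(-x)$ and the set of skewness directions is $\mathrm{SD}_\gamma=\{v:\gamma(v)=\sigma\gamma(-v)=1\}$. *)

theory Defs
  imports "HOL-Analysis.Analysis"
begin

definition gauge_body :: "'a::euclidean_space set \<Rightarrow> bool" where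
  "gauge_body B \<longleftrightarrow> convex B \<and> compact B \<and> 0 \<in> interior B"

definition minkowski_gauge :: "'a::euclidean_space set \<Rightarrow> 'a \<Rightarrow> real" where
  "minkowski_gauge B x = Inf {t. t > 0 \<and> x \<in> (\<lambda>y. t *\<^sub>R y) ` B}"

definition skewness :: "'a::euclidean_space set \<Rightarrow> real" where
  "skewness B = (SUP x\<in>UNIV - {0}. minkowski_gauge B x / minkowski_gauge B (- x))"

definition skewness_directions :: "'a::euclidean_space set \<Rightarrow> 'a set" where
  "skewness_directions B = {v. minkowski_gauge B v = 1 \<and>
                                skewness B * minkowski_gauge B (- v) = 1}"

end

theory Submission
  imports Defs
begin

lemma gb_ball: assumes "gauge_body B" shows "\<exists>d>0. ball 0 d \<subseteq> B"
  using assms unfolding gauge_body_def by (meson mem_interior)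

lemma gb_bound: assumes "gauge_body B" shows "\<exists>R>0. \<forall>y\<in>B. norm y \<le> R"
  using assms unfolding gauge_body_def by (meson bounded_pos compact_imp_bounded)

lemma mem_scale:
  assumes "ball 0 d \<subseteq> B" "d > 0" "t > norm x / d"
  shows "t \<in> {t. t > 0 \<and> x \<in> (\<lambda>y. t *\<^sub>R y) ` B}"
proof -
  have t0: "t > 0" using assms(2,3) by (smt (verit) divide_nonneg_pos norm_ge_zero)
  have "norm x < t * d" using assms(2,3) by (simp add: divide_less_eq mult.commute)
  hence "norm (x /\<^sub>R t) < d" using t0 by (simp add: field_simps)
  hence "x /\<^sub>R t \<in> B" using assms(1) by auto
  moreover have "x = t *\<^sub>R (x /\<^sub>R t)" using t0 by simp
  ultimately show ?thesis using t0 by blast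
qed

lemma mg_ne: assumes "gauge_body B" shows "{t. t > 0 \<and> x \<in> (\<lambda>y. t *\<^sub>R y) ` B} \<noteq> {}"
proof -
  obtain d where "d>0" "ball 0 d \<subseteq> B" using gb_ball[OF assms] by blast
  thus ?thesis using mem_scale[of d B x "norm x / d + 1"] by auto
qed

lemma mg_nonneg: assumes "gauge_body B" shows "0 \<le> minkowski_gauge B x"
  unfolding minkowski_gauge_def using mg_ne[OF assms]
  by (intro cInf_greatest) auto

lemma mg_le: assumes "t > 0" "y \<in> B" "x = t *\<^sub>R y"
  shows "minkowski_gauge B x \<le> t"
  unfolding minkowski_gauge_def
  by (rule cInf_lower) (use assms in \<open>auto intro!: bdd_belowI[where m=0]\<close>)

lemma mg_upper: assumes "ball 0 d \<subseteq> B" "d > 0"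
  shows "minkowski_gauge B x \<le> norm x / d"
proof (rule dense_ge)
  fix z assume "norm x / d < z"
  from mem_scale[OF assms this] obtain y where "z > 0" "y \<in> B" "x = z *\<^sub>R y" by auto
  thus "minkowski_gauge B x \<le> z" by (rule mg_le)
qed

lemma mg_lower: assumes "gauge_body B" "R > 0" "\<forall>y\<in>B. norm y \<le> R"
  shows "norm x / R \<le> minkowski_gauge B x"
  unfolding minkowski_gauge_def
proof (rule cInf_greatest)
  show "{t. t > 0 \<and> x \<in> (\<lambda>y. t *\<^sub>R y) ` B} \<noteq> {}" by (rule mg_ne[OF assms(1)])
  fix t assume "t \<in> {t. t > 0 \<and> x \<in> (\<lambda>y. t *\<^sub>R y) ` B}"
  then obtain y where y: "t > 0" "y \<in> B" "x = t *\<^sub>R y" by auto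
  have "norm x = t * norm y" using y by simp
  also have "\<dots> \<le> t * R" using y assms(3) by (simp add: mult_left_mono)
  finally show "norm x / R \<le> t" using assms(2) by (simp add: divide_le_eq)
qed

lemma mg_lin:
  assumes "gauge_body B" "b > 0" "\<forall>y\<in>B. inner a y \<le> b"
  shows "inner a x / b \<le> minkowski_gauge B x"
  unfolding minkowski_gauge_def
proof (rule cInf_greatest)
  show "{t. t > 0 \<and> x \<in> (\<lambda>y. t *\<^sub>R y) ` B} \<noteq> {}" by (rule mg_ne[OF assms(1)])
  fix t assume "t \<in> {t. t > 0 \<and> x \<in> (\<lambda>y. t *\<^sub>R y) ` B}"
  then obtain y where y: "t > 0" "y \<in> B" "x = t *\<^sub>R y" by auto
  have "inner a x = t * inner a y" using y by simp
  also have "\<dots> \<le> t * b" using y assms(3) by (simp add: mult_left_mono)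
  finally show "inner a x / b \<le> t" using assms(2) by (simp add: divide_le_eq)
qed

lemma mg_hom_le: assumes "gauge_body B" "c > 0"
  shows "minkowski_gauge B (c *\<^sub>R x) \<le> c * minkowski_gauge B x"
proof -
  have "minkowski_gauge B (c *\<^sub>R x) / c \<le> minkowski_gauge B x"
    unfolding minkowski_gauge_def[of B x]
  proof (rule cInf_greatest)
    show "{t. t > 0 \<and> x \<in> (\<lambda>y. t *\<^sub>R y) ` B} \<noteq> {}" by (rule mg_ne[OF assms(1)])
    fix t assume "t \<in> {t. t > 0 \<and> x \<in> (\<lambda>y. t *\<^sub>R y) ` B}"
    then obtain y where y: "t > 0" "y \<in> B" "x = t *\<^sub>R y" by auto
    have "minkowski_gauge B (c *\<^sub>R x) \<le> c * t"
      by (rule mg_le[of _ y]) (use y assms in auto)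
    thus "minkowski_gauge B (c *\<^sub>R x) / c \<le> t" using assms(2)
      by (simp add: divide_le_eq mult.commute)
  qed
  thus ?thesis using assms(2) by (simp add: divide_le_eq mult.commute)
qed

lemma mg_hom: assumes "gauge_body B" "c > 0"
  shows "minkowski_gauge B (c *\<^sub>R x) = c * minkowski_gauge B x"
proof -
  have "minkowski_gauge B x = minkowski_gauge B (inverse c *\<^sub>R (c *\<^sub>R x))"
    using assms(2) by simp
  also have "\<dots> \<le> inverse c * minkowski_gauge B (c *\<^sub>R x)"
    by (rule mg_hom_le[OF assms(1)]) (use assms(2) in simp)
  finally have "c * minkowski_gauge B x \<le> minkowski_gauge B (c *\<^sub>R x)"
    using assms(2) by (simp add: field_simps)
  with mg_hom_le[OF assms, of x] show ?thesis by linarith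
qed

lemma mg_zero: assumes "gauge_body B" shows "minkowski_gauge B 0 = 0"
proof -
  obtain d where "d>0" "ball 0 d \<subseteq> B" using gb_ball[OF assms] by blast
  from mg_upper[OF this(2,1), of 0] mg_nonneg[OF assms, of 0] show ?thesis by simp
qed

theorem mainTheorem2:
  fixes B :: "'a::euclidean_space set" and v p :: 'a
    and A :: "'a set" and w :: "'a \<Rightarrow> real"
  assumes "gauge_body B"
    and "v \<in> skewness_directions B"
    and "finite A"
    and "\<forall>a\<in>A. w a > 0"
    and "\<forall>a\<in>A. \<exists>t::real. a = p + t *\<^sub>R v"
  shows "\<exists>t::real. \<forall>y. (\<Sum>a\<in>A. w a * minkowski_gauge B (p + t *\<^sub>R v - a))
                     \<le> (\<Sum>a\<in>A. w a * minkowski_gauge B (y - a))"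
proof -
  let ?g = "minkowski_gauge B"
  define \<sigma> where "\<sigma> = skewness B"
  have gv: "?g v = 1" and sv: "\<sigma> * ?g (-v) = 1"
    using assms(2) by (auto simp: skewness_directions_def \<sigma>_def)
  have gmv0: "?g (-v) \<ge> 0" by (rule mg_nonneg[OF assms(1)])
  have s0: "\<sigma> > 0"
  proof (rule ccontr)
    assume "\<not> \<sigma> > 0"
    hence "\<sigma> * ?g (-v) \<le> 0" using gmv0 by (simp add: mult_nonpos_nonneg)
    thus False using sv by simp
  qed
  have gmv: "?g (-v) = 1/\<sigma>" using sv s0 by (simp add: field_simps)
  have v0: "v \<noteq> 0" using gv mg_zero[OF assms(1)] by auto
  obtain d where d: "d>0" "ball 0 d \<subseteq> B" using gb_ball[OF assms(1)] by blast
  obtain R where R: "R>0" "\<forall>y\<in>B. norm y \<le> R" using gb_bound[OF assms(1)] by blast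
  have pos: "?g x > 0" if "x \<noteq> 0" for x
  proof -
    have "norm x / R > 0" using that R by simp
    with mg_lower[OF assms(1) R, of x] show ?thesis by linarith
  qed
  have skew: "?g x \<le> \<sigma> * ?g (-x)" for x
  proof (cases "x = 0")
    case True thus ?thesis using mg_zero[OF assms(1)] by simp
  next
    case False
    have p1: "?g (-x) > 0" using pos False by simp
    have bdd: "bdd_above ((\<lambda>x. ?g x / ?g (-x)) ` (UNIV - {0}))"
    proof (rule bdd_aboveI2)
      fix z :: 'a assume "z \<in> UNIV - {0}"
      hence z: "z \<noteq> 0" by simp
      have a1: "?g z \<le> norm z / d" by (rule mg_upper[OF d(2,1)])
      have a2: "norm z / R \<le> ?g (-z)" using mg_lower[OF assms(1) R, of "-z"] by simp
      have a3: "norm z / R > 0" using z R by simp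
      have "?g z / ?g (-z) \<le> (norm z / d) / (norm z / R)"
        by (rule frac_le) (use a1 a2 a3 d mg_nonneg[OF assms(1)] in auto)
      also have "\<dots> = R / d" using z R d by (simp add: field_simps)
      finally show "?g z / ?g (-z) \<le> R / d" .
    qed
    have "?g x / ?g (-x) \<le> \<sigma>"
      unfolding \<sigma>_def skewness_def by (rule cSUP_upper) (use False bdd in auto)
    thus ?thesis using p1 by (simp add: divide_le_eq)
  qed
  have vni: "v \<notin> interior B"
  proof
    assume "v \<in> interior B"
    then obtain e where e: "e > 0" "ball v e \<subseteq> B" by (meson mem_interior)
    define c where "c = 1 + e / (2 * norm v)"
    have nv: "norm v > 0" using v0 by simp
    have c1: "c > 1" using e nv by (simp add: c_def)
    have "norm (v - c *\<^sub>R v) = norm ((1 - c) *\<^sub>R v)" by (simp add: algebra_simps)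
    also have "\<dots> = (c - 1) * norm v" using c1 by simp
    also have "\<dots> = e / 2" using nv by (simp add: c_def)
    finally have "c *\<^sub>R v \<in> ball v e" using e by (simp add: dist_norm)
    hence cv: "c *\<^sub>R v \<in> B" using e by auto
    have "?g v \<le> inverse c"
      by (rule mg_le[OF _ cv]) (use c1 in auto)
    thus False using gv c1 by (simp add: inverse_eq_divide divide_le_eq)
  qed
  have cvB: "convex B" using assms(1) by (simp add: gauge_body_def)
  have int0: "0 \<in> interior B" using assms(1) by (simp add: gauge_body_def)
  obtain a b where ab: "a \<noteq> 0" "\<forall>x\<in>interior B. inner a x \<le> b" "\<forall>x\<in>{v}. inner a x \<ge> b"
    using separating_hyperplane_sets[of "interior B" "{v}"] cvB int0 vni by auto
  have aB: "\<forall>y\<in>B. inner a y \<le> inner a v"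
  proof
    fix y assume y: "y \<in> B"
    have "closure (interior B) \<subseteq> {y. inner a y \<le> b}"
      by (rule closure_minimal) (use ab(2) closed_halfspace_le in auto)
    moreover have "closure (interior B) = closure B"
      by (rule convex_closure_interior[OF cvB]) (use int0 in auto)
    ultimately have "inner a y \<le> b" using y closure_subset by blast
    thus "inner a y \<le> inner a v" using ab(3) by auto
  qed
  have av: "inner a v > 0"
  proof -
    define y where "y = (d / (2 * norm a)) *\<^sub>R a"
    have na: "norm a > 0" using ab(1) by simp
    have "norm y = d / 2" using na d by (simp add: y_def)
    hence "y \<in> B" using d by auto
    hence "inner a y \<le> inner a v" using aB by auto
    moreover have "inner a y = (d / (2 * norm a)) * (norm a)^2"
      by (simp add: y_def power2_norm_eq_inner)
    moreover have "(d / (2 * norm a)) * (norm a)^2 > 0" using na d by simp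
    ultimately show ?thesis by linarith
  qed
  define ell where "ell x = inner a x / inner a v" for x
  have lle: "ell x \<le> ?g x" for x unfolding ell_def by (rule mg_lin[OF assms(1) av aB])
  define h where "h r = max r (-r/\<sigma>)" for r
  have hpos: "h r = r" if "r \<ge> 0" for r
    unfolding h_def using that s0 divide_nonneg_pos[of r \<sigma>] by (intro max_absorb1) linarith
  have hneg: "h r = -r/\<sigma>" if "r \<le> 0" for r
    unfolding h_def using that s0 divide_nonpos_pos[of r \<sigma>] by (intro max_absorb2) linarith
  have hg: "?g (r *\<^sub>R v) = h r" for r
  proof (cases "r \<ge> 0")
    case True
    show ?thesis
    proof (cases "r = 0")
      case True thus ?thesis using mg_zero[OF assms(1)] by (simp add: h_def)
    next
      case False
      hence "r > 0" using True by simp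
      hence "?g (r *\<^sub>R v) = r" using mg_hom[OF assms(1), of r v] gv by simp
      moreover have "h r = r" unfolding h_def using True s0 divide_nonneg_pos[of r \<sigma>] by (intro max_absorb1) linarith
      ultimately show ?thesis by simp
    qed
  next
    case False
    hence "?g ((-r) *\<^sub>R (-v)) = -r / \<sigma>" using mg_hom[OF assms(1), of "-r" "-v"] gmv by simp
    moreover have "h r = -r/\<sigma>" unfolding h_def using False s0 divide_neg_pos[of r \<sigma>] by (intro max_absorb2) linarith
    ultimately show ?thesis by simp
  qed
  define tt where "tt a' = (SOME t. a' = p + t *\<^sub>R v)" for a'
  have tt: "a' = p + tt a' *\<^sub>R v" if "a' \<in> A" for a'
    using assms(5) that unfolding tt_def by (metis (mono_tags, lifting) someI_ex)
  define G where "G s = (\<Sum>a'\<in>A. w a' * h (s - tt a'))" for s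
  have lv: "ell v = 1" using av by (simp add: ell_def)
  have Gle: "G (ell (y - p)) \<le> (\<Sum>a'\<in>A. w a' * ?g (y - a'))" for y
    unfolding G_def
  proof (rule sum_mono)
    fix a' assume a': "a' \<in> A"
    have eq: "y - a' = (y - p) - tt a' *\<^sub>R v" using tt[OF a'] by (simp add: algebra_simps)
    have lr: "ell (y - a') = ell (y - p) - tt a'"
      unfolding eq using av by (simp add: ell_def inner_diff_right inner_add_right field_simps)
    define r where "r = ell (y - a')"
    have h1: "r \<le> ?g (y - a')" using lle r_def by simp
    have "-r = ell (a' - y)" by (simp add: r_def ell_def inner_diff_right field_simps minus_divide_left diff_divide_distrib)
    also have "\<dots> \<le> ?g (a' - y)" by (rule lle)
    also have "\<dots> \<le> \<sigma> * ?g (y - a')" using skew[of "a' - y"] by simp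
    finally have "-r/\<sigma> \<le> ?g (y - a')" using s0 by (simp only: pos_divide_le_eq mult.commute)
    hence "h r \<le> ?g (y - a')" using h1 by (simp add: h_def)
    thus "w a' * h (ell (y - p) - tt a') \<le> w a' * ?g (y - a')"
      using lr r_def assms(4) a' by (simp add: mult_left_mono)
  qed
  have Gsum: "(\<Sum>a'\<in>A. w a' * ?g (p + s *\<^sub>R v - a')) = G s" for s
    unfolding G_def
  proof (rule sum.cong)
    fix a' assume a': "a' \<in> A"
    have "p + s *\<^sub>R v - a' = (s - tt a') *\<^sub>R v"
      using tt[OF a'] by (simp add: algebra_simps)
    thus "w a' * ?g (p + s *\<^sub>R v - a') = w a' * h (s - tt a')" using hg by simp
  qed simp
  show ?thesis
  proof (cases "A = {}")
    case True thus ?thesis by simp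
  next
    case False
    define L where "L = Min (tt ` A)"
    define U where "U = Max (tt ` A)"
    have fin: "finite (tt ` A)" "tt ` A \<noteq> {}" using assms(3) False by auto
    have LU: "L \<le> U" unfolding L_def U_def using fin by (meson Max_ge Min_le_iff imageI ex_in_conv False)
    have Lt: "L \<le> tt a'" "tt a' \<le> U" if "a' \<in> A" for a'
      unfolding L_def U_def using fin that by auto
    have cont: "continuous_on {L..U} G"
      unfolding G_def h_def by (intro continuous_intros) (use s0 in auto)
    obtain s where s: "s \<in> {L..U}" "\<forall>s'\<in>{L..U}. G s \<le> G s'"
      using continuous_attains_inf[OF compact_Icc _ cont] LU by auto
    have Gmin: "G s \<le> G s'" for s'
    proof -
      consider "s' < L" | "s' \<in> {L..U}" | "s' > U" by force
      thus ?thesis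
      proof cases
        case 1
        have "G L \<le> G s'" unfolding G_def
        proof (rule sum_mono)
          fix a' assume a': "a' \<in> A"
          have "h (L - tt a') \<le> h (s' - tt a')"
            using Lt(1)[OF a'] 1 s0 hneg[of "L - tt a'"] hneg[of "s' - tt a'"]
            by (simp add: divide_right_mono)
          thus "w a' * h (L - tt a') \<le> w a' * h (s' - tt a')"
            using assms(4) a' by (simp add: mult_left_mono)
        qed
        moreover have "G s \<le> G L" using s(2) LU by auto
        ultimately show ?thesis by linarith
      next
        case 2 thus ?thesis using s by auto
      next
        case 3
        have "G U \<le> G s'" unfolding G_def
        proof (rule sum_mono)
          fix a' assume a': "a' \<in> A"
          have "h (U - tt a') \<le> h (s' - tt a')"
            using Lt(2)[OF a'] 3 hpos[of "U - tt a'"] hpos[of "s' - tt a'"] by simp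
          thus "w a' * h (U - tt a') \<le> w a' * h (s' - tt a')"
            using assms(4) a' by (simp add: mult_left_mono)
        qed
        moreover have "G s \<le> G U" using s(2) LU by auto
        ultimately show ?thesis by linarith
      qed
    qed
    show ?thesis
    proof (intro exI allI)
      fix y
      have "(\<Sum>a'\<in>A. w a' * ?g (p + s *\<^sub>R v - a')) = G s" by (rule Gsum)
      also have "\<dots> \<le> G (ell (y - p))" by (rule Gmin)
      also have "\<dots> \<le> (\<Sum>a'\<in>A. w a' * ?g (y - a'))" by (rule Gle)
      finally show "(\<Sum>a'\<in>A. w a' * ?g (p + s *\<^sub>R v - a')) \<le> (\<Sum>a'\<in>A. w a' * ?g (y - a'))" .
    qed
  qed
qed

end
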